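(* For every integer $k\ge1$, the monomials $u^iv^jw^{2k-i-j}$ occurring with nonzero coefficient in $P_{k/(k+1)}(u,v,w)$ are exactly those with $(i,j)\in\mathbb{Z}^2$, $i,j\ge0$, $\frac{i}{k}+\frac{j}{k+1}\ge1$ and $i+j\le 2k$.
   Context: Markov polynomials. Let $x,y,z$ be indeterminates. Consider the set consisting of all rationals $\rho\in[0,1]$, each written in lowest terms $\rho=a/b$ with integers $a\ge 0$, $b\ge 1$, together with the formal symbol $1/0$. Define Laurent polynomials $M_\rho(x,y,z)$ recursively by $M_{1/0}=y$, $M_{0/1}=x$, $M_{1/1}=\frac{x^2+y^2}{z}$, and: whenever $a/b$, $c/d$ are in this set with $|ad-bc|=1$ and $(a+2c)/(b+2d)\in[0,1]$, then $M_{\frac{a+2c}{b+2d}}=\big(M_{c/d}^2+M_{\frac{a+c}{b+d}}^2\big)/M_{a/b}$. This determines $M_\rho$ for every rational $\rho\in[0,1]$. Numerator. For coprime $1\le a\le b$, $P_{a/b}(u,v,w)$ denotes the homogeneous polynomial of degree $a+b-1$ such that $M_{a/b}(x,y,z)=P_{a/b}(x^2,y^2,z^2)/(x^{a-1}y^{b-1}z^{a+b-1})$; its existence is known. *)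

theory Defs
  imports Complex_Main
begin

text \<open>Indices: a pair (a,b) of naturals stands for the fraction a/b. The index set consists
of all rationals in [0,1] in lowest terms (coprime a b, a \<le> b, b \<ge> 1) together with 1/0.\<close>

definition markov_index :: "nat \<times> nat \<Rightarrow> bool" where
  "markov_index p \<longleftrightarrow> (case p of (a, b) \<Rightarrow>
      (coprime a b \<and> a \<le> b \<and> 1 \<le> b) \<or> (a = 1 \<and> b = 0))"

text \<open>Laurent polynomials M are represented by the functions they define on the positive
orthant x,y,z > 0 (where all M are positive). A family M satisfies the defining recursion.\<close>

definition markov_family :: "(nat \<times> nat \<Rightarrow> real \<Rightarrow> real \<Rightarrow> real \<Rightarrow> real) \<Rightarrow> bool" where
  "markov_family M \<longleftrightarrow>
     (\<forall>x y z. x > 0 \<longrightarrow> y > 0 \<longrightarrow> z > 0 \<longrightarrow>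
        M (1, 0) x y z = y \<and> M (0, 1) x y z = x \<and> M (1, 1) x y z = (x^2 + y^2) / z) \<and>
     (\<forall>a b c d. markov_index (a, b) \<longrightarrow> markov_index (c, d) \<longrightarrow>
        \<bar>int a * int d - int b * int c\<bar> = 1 \<longrightarrow> a + 2 * c \<le> b + 2 * d \<longrightarrow>
        (\<forall>x y z. x > 0 \<longrightarrow> y > 0 \<longrightarrow> z > 0 \<longrightarrow>
           M (a + 2 * c, b + 2 * d) x y z =
             ((M (c, d) x y z)^2 + (M (a + c, b + d) x y z)^2) / M (a, b) x y z))"

definition hom_poly :: "nat \<Rightarrow> (nat \<Rightarrow> nat \<Rightarrow> real) \<Rightarrow> real \<Rightarrow> real \<Rightarrow> real \<Rightarrow> real" where
  "hom_poly n c u v w = (\<Sum>i\<le>n. \<Sum>j\<le>n - i. c i j * u ^ i * v ^ j * w ^ (n - i - j))"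

end

theory Submission
  imports Defs
begin

definition shu :: "(nat \<Rightarrow> nat \<Rightarrow> real) \<Rightarrow> nat \<Rightarrow> nat \<Rightarrow> real" where
  "shu c i j = (if i = 0 then 0 else c (i - 1) j)"
definition shv :: "(nat \<Rightarrow> nat \<Rightarrow> real) \<Rightarrow> nat \<Rightarrow> nat \<Rightarrow> real" where
  "shv c i j = (if j = 0 then 0 else c i (j - 1))"
definition addc :: "(nat \<Rightarrow> nat \<Rightarrow> real) \<Rightarrow> (nat \<Rightarrow> nat \<Rightarrow> real) \<Rightarrow> nat \<Rightarrow> nat \<Rightarrow> real" where
  "addc c d i j = c i j + d i j"

lemma hp_add: "hom_poly n (addc c d) u v w = hom_poly n c u v w + hom_poly n d u v w"
  by (simp add: hom_poly_def addc_def sum.distrib ring_distribs)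

lemma hp_shu: "hom_poly (Suc n) (shu c) u v w = u * hom_poly n c u v w"
  unfolding hom_poly_def
  apply (subst sum.atMost_Suc_shift)
  apply (simp add: shu_def sum_distrib_left mult_ac del: sum.atMost_Suc)
  done

lemma hp_shv: "hom_poly (Suc n) (shv c) u v w = v * hom_poly n c u v w"
proof -
  have "(\<Sum>j\<le>Suc n - i. shv c i j * u ^ i * v ^ j * w ^ (Suc n - i - j))
        = v * (\<Sum>j\<le>n - i. c i j * u ^ i * v ^ j * w ^ (n - i - j))" if "i \<le> n" for i
  proof -
    have e: "Suc n - i = Suc (n - i)" using that by simp
    show ?thesis unfolding e
      apply (subst sum.atMost_Suc_shift)
      apply (simp add: shv_def sum_distrib_left mult_ac del: sum.atMost_Suc)
      done
  qed
  then show ?thesis unfolding hom_poly_def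
    by (simp add: sum.atMost_Suc shv_def sum_distrib_left)
qed

lemma hp_w:
  assumes "\<And>i j. n < i + j \<Longrightarrow> c i j = 0"
  shows "hom_poly (Suc n) c u v w = w * hom_poly n c u v w"
proof -
  have "(\<Sum>j\<le>Suc n - i. c i j * u ^ i * v ^ j * w ^ (Suc n - i - j))
        = w * (\<Sum>j\<le>n - i. c i j * u ^ i * v ^ j * w ^ (n - i - j))" if "i \<le> n" for i
  proof -
    have e: "Suc n - i = Suc (n - i)" using that by simp
    have z: "c i (Suc (n - i)) = 0" using assms that by simp
    have "(\<Sum>j\<le>n - i. c i j * u ^ i * v ^ j * w ^ (Suc n - i - j))
        = (\<Sum>j\<le>n - i. w * (c i j * u ^ i * v ^ j * w ^ (n - i - j)))"
    proof (rule sum.cong)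
      fix j assume "j \<in> {..n - i}"
      then have "Suc n - i - j = Suc (n - i - j)" using that by auto
      then show "c i j * u ^ i * v ^ j * w ^ (Suc n - i - j) = w * (c i j * u ^ i * v ^ j * w ^ (n - i - j))"
        by simp
    qed simp
    then show ?thesis unfolding e
      by (simp add: z sum_distrib_left)
  qed
  moreover have "c (Suc n) 0 = 0" using assms by simp
  ultimately show ?thesis unfolding hom_poly_def
    by (simp add: sum.atMost_Suc sum_distrib_left)
qed

lemma hp_unique:
  assumes "\<And>u v w. u > 0 \<Longrightarrow> v > 0 \<Longrightarrow> w > 0 \<Longrightarrow> hom_poly n c u v w = 0"
    and "i + j \<le> n"
  shows "c i j = 0"
proof -
  define a where "a v i = (\<Sum>j\<le>n - i. c i j * v ^ j)" for v :: real and i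
  have A: "a v i = 0" if "v > 0" "i \<le> n" for v i
  proof -
    have "{0<..} \<subseteq> {x::real. (\<Sum>i\<le>n. a v i * x^i) = 0}"
    proof
      fix x :: real assume "x \<in> {0<..}"
      then have "hom_poly n c x v 1 = 0" using assms(1) that by auto
      moreover have "hom_poly n c x v 1 = (\<Sum>i\<le>n. a v i * x^i)"
        unfolding hom_poly_def a_def
        apply (auto simp: sum_distrib_left intro!: sum.cong)
        apply (simp add: sum_distrib_right)
        apply (rule sum.cong)
         apply simp
        apply (simp add: mult.left_commute)
        done
      ultimately show "x \<in> {x::real. (\<Sum>i\<le>n. a v i * x^i) = 0}" by simp
    qed
    then have "infinite {x::real. (\<Sum>i\<le>n. a v i * x^i) = 0}"
      using infinite_Ioi finite_subset by blast
    then show ?thesis using polyfun_finite_roots[of "a v" n] that(2) by blast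
  qed
  have "{0<..} \<subseteq> {x::real. (\<Sum>j\<le>n - i. c i j * x^j) = 0}"
    using A assms(2) a_def by auto
  then have "infinite {x::real. (\<Sum>j\<le>n - i. c i j * x^j) = 0}"
    using infinite_Ioi finite_subset by blast
  then have "\<forall>j\<le>n-i. c i j = 0" using polyfun_finite_roots[of "c i" "n-i"] by blast
  then show ?thesis using assms(2) by auto
qed


definition e0 :: "nat \<Rightarrow> nat \<Rightarrow> real" where
  "e0 i j = (if i = 0 \<and> j = 0 then 1 else 0)"

fun pr :: "nat \<Rightarrow> (nat \<Rightarrow> nat \<Rightarrow> real) \<times> (nat \<Rightarrow> nat \<Rightarrow> real)" where
  "pr 0 = (e0, addc (shu e0) (shv e0))"
| "pr (Suc k) = (let p' = addc (addc (shu (snd (pr k))) (shv (snd (pr k)))) (shu (fst (pr k)))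
                 in (p', addc (addc (shu p') (shv p')) (shv (snd (pr k)))))"

definition pc where "pc k = fst (pr k)"
definition rc where "rc k = snd (pr k)"

lemma pc0: "pc 0 = e0" by (simp add: pc_def)
lemma rc0: "rc 0 = addc (shu e0) (shv e0)" by (simp add: rc_def)
lemma pcS: "pc (Suc k) = addc (addc (shu (rc k)) (shv (rc k))) (shu (pc k))"
  by (simp add: pc_def rc_def Let_def)
lemma rcS: "rc (Suc k) = addc (addc (shu (pc (Suc k))) (shv (pc (Suc k)))) (shv (rc k))"
  by (simp add: pc_def rc_def Let_def)

lemma sum3_nz: "(a::real) \<ge> 0 \<Longrightarrow> b \<ge> 0 \<Longrightarrow> c \<ge> 0 \<Longrightarrow> (a + b + c \<noteq> 0 \<longleftrightarrow> a \<noteq> 0 \<or> b \<noteq> 0 \<or> c \<noteq> 0)"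
  by linarith

lemma coeff_char:
  "(\<forall>i j. pc k i j \<ge> 0 \<and> (pc k i j \<noteq> 0 \<longleftrightarrow> i + j \<le> 2 * k \<and> (k < i + j \<or> (i = k \<and> j = 0))))
   \<and> (\<forall>i j. rc k i j \<ge> 0 \<and> (rc k i j \<noteq> 0 \<longleftrightarrow> k + 1 \<le> i + j \<and> i + j \<le> 2 * k + 1))"
proof (induction k)
  case 0
  show ?case by (auto simp: pc0 rc0 e0_def addc_def shu_def shv_def)
next
  case (Suc k)
  then have P: "\<And>i j. pc k i j \<ge> 0" "\<And>i j. pc k i j \<noteq> 0 \<longleftrightarrow> i + j \<le> 2 * k \<and> (k < i + j \<or> (i = k \<and> j = 0))"
    and R: "\<And>i j. rc k i j \<ge> 0" "\<And>i j. rc k i j \<noteq> 0 \<longleftrightarrow> k + 1 \<le> i + j \<and> i + j \<le> 2 * k + 1"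
    by blast+
  have P1: "pc (Suc k) i j \<ge> 0" for i j
    using P R by (simp add: pcS addc_def shu_def shv_def)
  have P2: "pc (Suc k) i j \<noteq> 0 \<longleftrightarrow> i + j \<le> 2 * Suc k \<and> (Suc k < i + j \<or> (i = Suc k \<and> j = 0))" for i j
  proof -
    have "pc (Suc k) i j \<noteq> 0 \<longleftrightarrow> shu (rc k) i j \<noteq> 0 \<or> shv (rc k) i j \<noteq> 0 \<or> shu (pc k) i j \<noteq> 0"
      unfolding pcS addc_def by (rule sum3_nz) (use P R in \<open>auto simp: shu_def shv_def\<close>)
    also have "\<dots> \<longleftrightarrow> i + j \<le> 2 * Suc k \<and> (Suc k < i + j \<or> (i = Suc k \<and> j = 0))"
      unfolding shu_def shv_def using P(2)[of "i-1" j] R(2)[of "i-1" j] R(2)[of i "j-1"]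
      by (cases i; cases j) (simp_all, linarith+)
    finally show ?thesis .
  qed
  have R1: "rc (Suc k) i j \<ge> 0" for i j
    using P1 R by (simp add: rcS addc_def shu_def shv_def)
  have R2: "rc (Suc k) i j \<noteq> 0 \<longleftrightarrow> Suc k + 1 \<le> i + j \<and> i + j \<le> 2 * Suc k + 1" for i j
  proof -
    have "rc (Suc k) i j \<noteq> 0 \<longleftrightarrow> shu (pc (Suc k)) i j \<noteq> 0 \<or> shv (pc (Suc k)) i j \<noteq> 0 \<or> shv (rc k) i j \<noteq> 0"
      unfolding rcS addc_def by (rule sum3_nz) (use P1 R in \<open>auto simp: shu_def shv_def\<close>)
    also have "\<dots> \<longleftrightarrow> Suc k + 1 \<le> i + j \<and> i + j \<le> 2 * Suc k + 1"
      unfolding shu_def shv_def using P2[of "i-1" j] P2[of i "j-1"] R(2)[of i "j-1"]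
      by (cases i; cases j) (simp_all, linarith+)
    finally show ?thesis .
  qed
  show ?case using P1 P2 R1 R2 by blast
qed


definition Pf where "Pf k u v w = hom_poly (2 * k) (pc k) u v w"
definition Rf where "Rf k u v w = hom_poly (2 * k + 1) (rc k) u v w"

lemma pc_supp: assumes "2 * k < i + j" shows "pc k i j = 0"
proof (rule ccontr)
  assume "pc k i j \<noteq> 0"
  then have "i + j \<le> 2 * k" using coeff_char[of k] by blast
  with assms show False by simp
qed
lemma rc_supp: assumes "2 * k + 1 < i + j" shows "rc k i j = 0"
proof (rule ccontr)
  assume "rc k i j \<noteq> 0"
  then have "i + j \<le> 2 * k + 1" using coeff_char[of k] by blast
  with assms show False by simp
qed

lemma hp_e0: "hom_poly 0 e0 u v w = 1"
  by (simp add: hom_poly_def e0_def)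

lemma Pf0: "Pf 0 u v w = 1"
  by (simp add: Pf_def pc0 hp_e0)
lemma Rf0: "Rf 0 u v w = u + v"
  using hp_shu[of 0 e0 u v w] hp_shv[of 0 e0 u v w]
  by (simp add: Rf_def rc0 hp_add hp_e0)

lemma PfS: "Pf (Suc k) u v w = (u + v) * Rf k u v w + u * w * Pf k u v w"
proof -
  have e: "2 * Suc k = Suc (2 * k + 1)" by simp
  have "hom_poly (Suc (2 * k + 1)) (shu (pc k)) u v w = w * hom_poly (2 * k + 1) (shu (pc k)) u v w"
    by (rule hp_w) (auto simp: shu_def intro!: pc_supp)
  also have "\<dots> = w * (u * Pf k u v w)" using hp_shu[of "2*k" "pc k" u v w] by (simp add: Pf_def)
  finally have "hom_poly (Suc (2 * k + 1)) (shu (pc k)) u v w = u * w * Pf k u v w" by simp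
  then show ?thesis
    unfolding Pf_def[of "Suc k"] e pcS hp_add hp_shu hp_shv
    by (simp add: Rf_def algebra_simps)
qed

lemma RfS: "Rf (Suc k) u v w = (u + v) * Pf (Suc k) u v w + v * w * Rf k u v w"
proof -
  have e: "2 * Suc k + 1 = Suc (2 * Suc k)" by simp
  have e2: "2 * Suc k = Suc (2 * k + 1)" by simp
  have "hom_poly (Suc (2 * Suc k)) (shv (rc k)) u v w = w * hom_poly (Suc (2 * k + 1)) (shv (rc k)) u v w"
    unfolding e2 by (rule hp_w) (auto simp: shv_def intro!: rc_supp)
  also have "\<dots> = w * (v * Rf k u v w)" by (simp add: hp_shv Rf_def)
  finally have "hom_poly (Suc (2 * Suc k)) (shv (rc k)) u v w = v * w * Rf k u v w" by simp
  then show ?thesis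
    unfolding Rf_def[of "Suc k"] e rcS hp_add hp_shu hp_shv
    by (simp add: Pf_def algebra_simps)
qed

lemma Pf_pos: "u > 0 \<Longrightarrow> v > 0 \<Longrightarrow> w > 0 \<Longrightarrow> Pf k u v w > 0 \<and> Rf k u v w > 0"
proof (induction k)
  case 0 then show ?case by (simp add: Pf0 Rf0)
next
  case (Suc k)
  then have a: "Pf (Suc k) u v w > 0" by (simp add: PfS add_pos_pos)
  then show ?case using Suc by (simp add: RfS add_pos_pos)
qed

lemma Pf_lin: "Pf (Suc (Suc k)) u v w = (u + v) * (u + v + w) * Pf (Suc k) u v w - u * v * w^2 * Pf k u v w"
proof -
  have 1: "Pf (Suc (Suc k)) u v w = (u + v) * Rf (Suc k) u v w + u * w * Pf (Suc k) u v w" by (rule PfS)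
  have 2: "Rf (Suc k) u v w = (u + v) * Pf (Suc k) u v w + v * w * Rf k u v w" by (rule RfS)
  have 3: "(u + v) * Rf k u v w = Pf (Suc k) u v w - u * w * Pf k u v w" using PfS[of k u v w] by simp
  have "Pf (Suc (Suc k)) u v w = (u+v)^2 * Pf (Suc k) u v w + v * w * ((u + v) * Rf k u v w) + u * w * Pf (Suc k) u v w"
    unfolding 1 2 by (simp add: algebra_simps power2_eq_square)
  also have "\<dots> = (u + v) * (u + v + w) * Pf (Suc k) u v w - u * v * w^2 * Pf k u v w"
    unfolding 3 by (simp add: algebra_simps power2_eq_square)
  finally show ?thesis .
qed

lemma aux_inv: fixes a b c d T C :: real
  assumes h1: "d = T*c - C*b" and h2: "c = T*b - C*a" shows "d*b - c^2 = C*(c*a - b^2)"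
proof -
  have h3: "T*b = c + C*a" using h2 by simp
  have "d*b - c^2 = (T*c - C*b)*b - c*c" unfolding h1 by (simp add: power2_eq_square)
  also have "\<dots> = c*(T*b) - C*b*b - c*c" by (simp add: algebra_simps)
  also have "\<dots> = C*(c*a - b^2)" unfolding h3 by (simp add: power2_eq_square algebra_simps)
  finally show ?thesis .
qed

lemma Pf_inv: "Pf (Suc (Suc k)) u v w * Pf k u v w - (Pf (Suc k) u v w)^2
     = (u + v)^2 * u^k * v^(Suc k) * w^(2 * k + 1)"
proof (induction k)
  case 0
  have "Pf 1 u v w = (u+v)^2 + u * w" using PfS[of 0 u v w] by (simp add: Pf0 Rf0 power2_eq_square)
  then show ?case using Pf_lin[of 0 u v w] by (simp add: Pf0 algebra_simps power2_eq_square)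
next
  case (Suc k)
  have "Pf (Suc (Suc (Suc k))) u v w * Pf (Suc k) u v w - (Pf (Suc (Suc k)) u v w)^2
      = (u * v * w^2) * (Pf (Suc (Suc k)) u v w * Pf k u v w - (Pf (Suc k) u v w)^2)"
    by (rule aux_inv[OF Pf_lin Pf_lin])
  also have "\<dots> = (u + v)^2 * u^Suc k * v^(Suc (Suc k)) * w^(2 * Suc k + 1)"
    unfolding Suc by (simp add: algebra_simps power2_eq_square)
  finally show ?case .
qed


lemma alg_step:
  fixes x y z X Y Z P0 P1 P2 :: real
  assumes pos: "x > 0" "y > 0" "z > 0" "X > 0" "Y > 0" "Z > 0" "P0 > 0"
    and h: "P2 * P0 - P1^2 = (x^2 + y^2)^2 * X^2 * (Y^2 * y^2) * (Z^2 * z^2)"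
  shows "(((x^2 + y^2) / z)^2 + (P1 * x / (x * X * (y * Y) * (z^2 * Z)))^2) / (P0 * x / (X * Y * Z))
         = P2 * x / (x * (x * X) * (y * (y * Y)) * (z^2 * (z^2 * Z)))"
proof -
  define K where "K = (x^2 + y^2)^2 * X^2 * (Y^2 * y^2) * (Z^2 * z^2)"
  have h': "P1^2 = P2 * P0 - K" using h K_def by simp
  have "(P1 * x / (x * X * (y * Y) * (z^2 * Z)))^2 = (P2 * P0 - K) / (X * (y * Y) * (z^2 * Z))^2"
    using pos by (simp add: power_divide power_mult_distrib h')
  also have "\<dots> = P2 * P0 / (X * (y * Y) * (z^2 * Z))^2 - ((x^2 + y^2) / z)^2"
    using pos unfolding K_def by (simp add: field_simps power2_eq_square)
  finally have e: "(P1 * x / (x * X * (y * Y) * (z^2 * Z)))^2 = P2 * P0 / (X * (y * Y) * (z^2 * Z))^2 - ((x^2 + y^2) / z)^2" .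
  show ?thesis unfolding e using pos by (simp add: field_simps power2_eq_square)
qed

lemma markov_idx_step: "markov_index (j, Suc j)" "markov_index (1, 1)" "markov_index (1, 0)" "markov_index (0, 1)"
  by (auto simp: markov_index_def)

lemma M_formula:
  assumes fam: "markov_family M" and pos: "x > 0" "y > 0" "z > 0"
  shows "M (j, j + 1) x y z = Pf j (x^2) (y^2) (z^2) * x / (x^j * y^j * z^(2 * j))"
proof -
  have base: "M (1, 0) x y z = y" "M (0, 1) x y z = x" "M (1, 1) x y z = (x^2 + y^2) / z"
    using fam pos unfolding markov_family_def by auto
  have rec: "\<And>a b c d. markov_index (a, b) \<Longrightarrow> markov_index (c, d) \<Longrightarrow>
        \<bar>int a * int d - int b * int c\<bar> = 1 \<Longrightarrow> a + 2 * c \<le> b + 2 * d \<Longrightarrow>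
           M (a + 2 * c, b + 2 * d) x y z =
             ((M (c, d) x y z)^2 + (M (a + c, b + d) x y z)^2) / M (a, b) x y z"
    using fam pos unfolding markov_family_def by blast
  let ?F = "\<lambda>j. M (j, j + 1) x y z = Pf j (x^2) (y^2) (z^2) * x / (x^j * y^j * z^(2 * j))"
  have "?F j \<and> ?F (Suc j)"
  proof (induction j)
    case 0
    have b: "M (Suc 0, 0) x y z = y" "M (0, Suc 0) x y z = x" "M (Suc 0, Suc 0) x y z = (x^2 + y^2) / z"
      using base by simp_all
    have m12: "M (Suc 0, Suc (Suc 0)) x y z = ((M (0, Suc 0) x y z)^2 + (M (Suc 0, Suc 0) x y z)^2) / M (Suc 0, 0) x y z"
      using rec[of 1 0 0 1] markov_idx_step by simp
    have p1: "Pf (Suc 0) (x^2) (y^2) (z^2) = (x^2 + y^2)^2 + x^2 * z^2"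
      using PfS[of 0 "x^2" "y^2" "z^2"] by (simp add: Pf0 Rf0 power2_eq_square)
    have "M (Suc 0, Suc (Suc 0)) x y z = ((x^2 + y^2)^2 + x^2 * z^2) * x / (x * y * z^2)"
      unfolding m12 b using pos by (simp add: field_simps power2_eq_square)
    then show ?case
      using pos b(2) by (simp add: p1 Pf0)
  next
    case (Suc j)
    have m: "M (Suc (Suc j), Suc (Suc j) + 1) x y z
        = ((M (1, 1) x y z)^2 + (M (Suc j, Suc j + 1) x y z)^2) / M (j, j + 1) x y z"
      using rec[of j "Suc j" 1 1] markov_idx_step by (simp add: algebra_simps)
    have P0: "Pf j (x^2) (y^2) (z^2) > 0" using Pf_pos pos by simp
    have inv: "Pf (Suc (Suc j)) (x^2) (y^2) (z^2) * Pf j (x^2) (y^2) (z^2) - (Pf (Suc j) (x^2) (y^2) (z^2))^2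
       = (x^2 + y^2)^2 * (x^j)^2 * ((y^j)^2 * y^2) * ((z^(2*j))^2 * z^2)"
      unfolding Pf_inv by (simp add: power_mult[symmetric] power_add[symmetric] mult.commute power_Suc)
    have "M (Suc (Suc j), Suc (Suc j) + 1) x y z =
        (((x^2 + y^2) / z)^2 + (Pf (Suc j) (x^2) (y^2) (z^2) * x / (x * x^j * (y * y^j) * (z^2 * z^(2*j))))^2)
          / (Pf j (x^2) (y^2) (z^2) * x / (x^j * y^j * z^(2*j)))"
    proof -
      have pw: "x^(Suc j) * y^(Suc j) * z^(2*Suc j) = x * x^j * (y * y^j) * (z^2 * z^(2*j))"
        by (simp add: mult_ac power_add power2_eq_square)
      have i1: "M (Suc j, Suc j + 1) x y z = Pf (Suc j) (x^2) (y^2) (z^2) * x / (x * x^j * (y * y^j) * (z^2 * z^(2*j)))"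
        by (subst pw[symmetric]) (rule conjunct2[OF Suc.IH])
      show ?thesis unfolding m i1 using Suc.IH base(3) by simp
    qed
    also have "\<dots> = Pf (Suc (Suc j)) (x^2) (y^2) (z^2) * x / (x * (x * x^j) * (y * (y * y^j)) * (z^2 * (z^2 * z^(2*j))))"
      by (rule alg_step[OF pos _ _ _ P0 inv]) (use pos in auto)
    also have "x * (x * x^j) * (y * (y * y^j)) * (z^2 * (z^2 * z^(2*j))) = x^(Suc (Suc j)) * y^(Suc (Suc j)) * z^(2*Suc (Suc j))"
      by (simp add: mult_ac power_add power2_eq_square)
    finally show ?case using Suc.IH by simp
  qed
  then show ?thesis by blast
qed


lemma hp_diff: "hom_poly n (\<lambda>i j. c i j - d i j) u v w = hom_poly n c u v w - hom_poly n d u v w"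
  by (simp add: hom_poly_def sum_subtractf left_diff_distrib)

lemma region_nat:
  fixes i j k :: nat
  assumes "k \<ge> 1"
  shows "k * (k + 1) \<le> (k + 1) * i + k * j \<longleftrightarrow> k < i + j \<or> (i = k \<and> j = 0)"
proof -
  have eq: "(k + 1) * i + k * j = k * (i + j) + i" by (simp add: algebra_simps)
  consider "k < i + j" | "i + j = k" | "i + j < k" by linarith
  then show ?thesis
  proof cases
    case 1
    then have "k * (k + 1) \<le> k * (i + j)" by (intro mult_le_mono2) simp
    then show ?thesis using 1 eq by simp
  next
    case 2
    then show ?thesis using eq by (auto simp: algebra_simps)
  next
    case 3
    have "(k + 1) * (i + j) < (k + 1) * k" using 3 by (intro mult_less_mono2) auto
    moreover have "k * (i + j) + i \<le> (k + 1) * (i + j)" by (simp add: algebra_simps)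
    ultimately have "(k + 1) * i + k * j < k * (k + 1)" using eq by (simp add: mult.commute)
    then show ?thesis using 3 by simp
  qed
qed

lemma region:
  fixes i j k :: nat
  assumes "k \<ge> 1"
  shows "real i / real k + real j / real (k + 1) \<ge> 1 \<longleftrightarrow> k < i + j \<or> (i = k \<and> j = 0)"
proof -
  have kp: "real k > 0" using assms by simp
  have "real i / real k + real j / real (k + 1) = real ((k + 1) * i + k * j) / real (k * (k + 1))"
    using kp by (simp add: field_simps)
  also have "1 \<le> \<dots> \<longleftrightarrow> real (k * (k + 1)) \<le> real ((k + 1) * i + k * j)"
    using kp by (intro le_divide_eq_1_pos) (simp add: add_pos_pos)
  also have "\<dots> \<longleftrightarrow> k * (k + 1) \<le> (k + 1) * i + k * j" by (rule of_nat_le_iff)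
  finally show ?thesis using region_nat[OF assms] by simp
qed

theorem corollary5p4:
  fixes M :: "nat \<times> nat \<Rightarrow> real \<Rightarrow> real \<Rightarrow> real \<Rightarrow> real"
    and k :: nat and c :: "nat \<Rightarrow> nat \<Rightarrow> real"
  assumes "markov_family M"
    and "k \<ge> 1"
    and "\<forall>x y z. x > 0 \<longrightarrow> y > 0 \<longrightarrow> z > 0 \<longrightarrow>
           M (k, k + 1) x y z =
             hom_poly (2 * k) c (x^2) (y^2) (z^2) / (x ^ (k - 1) * y ^ k * z ^ (2 * k))"
  shows "{(i, j). i + j \<le> 2 * k \<and> c i j \<noteq> 0} =
         {(i, j). i + j \<le> 2 * k \<and> real i / real k + real j / real (k + 1) \<ge> 1}"
proof -
  have hz: "hom_poly (2 * k) (\<lambda>i j. c i j - pc k i j) u v w = 0" if "u > 0" "v > 0" "w > 0" for u v w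
  proof -
    define x y z where "x = sqrt u" and "y = sqrt v" and "z = sqrt w"
    have pos: "x > 0" "y > 0" "z > 0" using that x_def y_def z_def by auto
    have sq: "x^2 = u" "y^2 = v" "z^2 = w" using that x_def y_def z_def by auto
    have xk: "x ^ k = x * x ^ (k - 1)" using assms(2) by (cases k) auto
    have D: "x ^ (k - 1) * y ^ k * z ^ (2 * k) > 0" using pos by simp
    have "hom_poly (2 * k) c (x^2) (y^2) (z^2) / (x ^ (k - 1) * y ^ k * z ^ (2 * k))
        = Pf k (x^2) (y^2) (z^2) * x / (x ^ k * y ^ k * z ^ (2 * k))"
      using assms(3) M_formula[OF assms(1) pos, of k] pos by simp
    also have "\<dots> = Pf k (x^2) (y^2) (z^2) / (x ^ (k - 1) * y ^ k * z ^ (2 * k))"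
      unfolding xk using pos by (simp add: field_simps)
    finally have "hom_poly (2 * k) c u v w = Pf k u v w"
      using D pos unfolding sq by (simp add: divide_cancel_right)
    then show ?thesis by (simp add: hp_diff Pf_def)
  qed
  have ceq: "c i j = pc k i j" if "i + j \<le> 2 * k" for i j
    using hp_unique[of "2 * k" "\<lambda>i j. c i j - pc k i j" i j] hz that by simp
  have "c i j \<noteq> 0 \<longleftrightarrow> real i / real k + real j / real (k + 1) \<ge> 1" if "i + j \<le> 2 * k" for i j
    using ceq[OF that] coeff_char[of k] region[OF assms(2), of i j] that by auto
  then show ?thesis by auto
qed

end
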